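(* Let $G$ be a profinite group and $H$ an accessible subgroup of $G$ of infinite index. Suppose $G=H_0\ge\cdots\ge H_\lambda\ge\cdots\ge H_\mu=H$ is an accessible series from $G$ to $H$ over an ordinal $\mu$ such that every quotient $H_\lambda/H_{\lambda+1}$ ($\lambda<\mu$) is finite and nontrivial. Then $|\mu|=\omega_0(G/H)$.
   Context: All subgroups are closed. An accessible series from $G$ to a closed subgroup $H$ over an ordinal $\mu$ is a family of closed subgroups $G=H_0\ge\cdots\ge H_\lambda\ge\cdots\ge H_\mu=H$ with $H_{\alpha+1}\trianglelefteq H_\alpha$ for all $\alpha<\mu$ and $H_\alpha=\bigcap_{\beta<\alpha}H_\beta$ for all limit $\alpha\le\mu$; $H$ is accessible if such a series exists. For a closed non-open subgroup $H$ of $G$, $\omega_0(G/H)$ denotes the cardinality of the set of all open subgroups of $G$ containing $H$; $|\mu|$ is the cardinality of the ordinal $\mu$. *)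

theory Defs
  imports "HOL-Analysis.Analysis" "HOL-Algebra.Algebra" "HOL-Library.Equipollence"
begin

definition topological_group :: "('a, 'b) monoid_scheme \<Rightarrow> 'a topology \<Rightarrow> bool" where
  "topological_group G T \<longleftrightarrow>
     group G \<and> topspace T = carrier G \<and>
     continuous_map (prod_topology T T) T (\<lambda>(x, y). x \<otimes>\<^bsub>G\<^esub> y) \<and>
     continuous_map T T (\<lambda>x. inv\<^bsub>G\<^esub> x)"

definition profinite_group :: "('a, 'b) monoid_scheme \<Rightarrow> 'a topology \<Rightarrow> bool" where
  "profinite_group G T \<longleftrightarrow>
     topological_group G T \<and> compact_space T \<and> Hausdorff_space T \<and>
     (\<forall>x\<in>topspace T. connected_component_of_set T x = {x})"

definition closed_subgroup :: "'a set \<Rightarrow> ('a, 'b) monoid_scheme \<Rightarrow> 'a topology \<Rightarrow> bool" where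
  "closed_subgroup K G T \<longleftrightarrow> subgroup K G \<and> closedin T K"

definition open_subgroup :: "'a set \<Rightarrow> ('a, 'b) monoid_scheme \<Rightarrow> 'a topology \<Rightarrow> bool" where
  "open_subgroup K G T \<longleftrightarrow> subgroup K G \<and> openin T K"

definition idx_succ :: "'i::wellorder \<Rightarrow> 'i" where
  "idx_succ a = (LEAST b. a < b)"

definition idx_limit :: "'i::wellorder \<Rightarrow> bool" where
  "idx_limit a \<longleftrightarrow> (\<exists>b. b < a) \<and> (\<forall>b<a. \<exists>c. b < c \<and> c < a)"

text \<open>An accessible series from G to K over the ordinal represented by the
  initial segment of indices up to m (the ordinal \<mu> is the order type of
  {..<m}; index LEAST True is 0, index m is \<mu>).\<close>
definition accessible_series ::
  "('a, 'b) monoid_scheme \<Rightarrow> 'a topology \<Rightarrow> ('i::wellorder \<Rightarrow> 'a set) \<Rightarrow> 'i \<Rightarrow> 'a set \<Rightarrow> bool" where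
  "accessible_series G T Hs m K \<longleftrightarrow>
     (\<forall>a\<le>m. closed_subgroup (Hs a) G T) \<and>
     Hs (LEAST i. True) = carrier G \<and>
     Hs m = K \<and>
     (\<forall>a b. a \<le> b \<and> b \<le> m \<longrightarrow> Hs b \<subseteq> Hs a) \<and>
     (\<forall>a<m. Hs (idx_succ a) \<lhd> (G\<lparr>carrier := Hs a\<rparr>)) \<and>
     (\<forall>a\<le>m. idx_limit a \<longrightarrow> Hs a = (\<Inter>b\<in>{..<a}. Hs b))"

end

theory Submission
  imports Defs
begin


lemma lepoll_UN_inf:
  assumes "infinite B" "lepoll I B" "\<And>i. i \<in> I \<Longrightarrow> lepoll (A i) B"
  shows "lepoll (\<Union>i\<in>I. A i) B"
proof -
  have "ordLeq2 (card_of (\<Union>i\<in>I. A i)) (card_of B)"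
    apply (rule card_of_UNION_ordLeq_infinite)
    using assms by (auto simp: lepoll_def card_of_ordLeq[symmetric])
  then show ?thesis by (simp add: lepoll_def card_of_ordLeq[symmetric])
qed

lemma idx_succ_gt: "(a::'i::wellorder) < m \<Longrightarrow> a < idx_succ a"
  unfolding idx_succ_def by (rule LeastI)

lemma idx_succ_le: "(a::'i::wellorder) < b \<Longrightarrow> idx_succ a \<le> b"
  unfolding idx_succ_def by (rule Least_le)

lemma idx_cases:
  fixes l :: "'i::wellorder"
  shows "l = (LEAST i. True) \<or> idx_limit l \<or> (\<exists>b<l. idx_succ b = l)"
proof (cases "\<exists>b. b < l")
  case False
  have "(LEAST i::'i. True) \<le> l" by (rule Least_le) simp
  then have "l = (LEAST i. True)" using False by (metis order_le_less)
  then show ?thesis by blast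
next
  case True
  show ?thesis
  proof (cases "idx_limit l")
    case True then show ?thesis by blast
  next
    case nl: False
    then obtain b where b: "b < l" "\<not> (\<exists>c. b < c \<and> c < l)"
      using True unfolding idx_limit_def by blast
    have "b < idx_succ b" using idx_succ_gt[OF b(1)] .
    moreover have "idx_succ b \<le> l" using idx_succ_le[OF b(1)] .
    ultimately have "idx_succ b = l" using b(2) by (metis order_le_less)
    then show ?thesis using b(1) by blast
  qed
qed

lemma infinite_times_UNIV: "A \<noteq> {} \<Longrightarrow> infinite (A \<times> (UNIV::nat set))"
  using finite_cartesian_productD2 by blast

locale pgrp = group G for G (structure) + fixes T assumes prof: "profinite_group G T"
begin

lemma tsp: "topspace T = carrier G"
  using prof by (simp add: profinite_group_def topological_group_def)
lemma cmult: "continuous_map (prod_topology T T) T (\<lambda>(x, y). x \<otimes> y)"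
  using prof by (simp add: profinite_group_def topological_group_def)
lemma cinv: "continuous_map T T (\<lambda>x. inv x)"
  using prof by (simp add: profinite_group_def topological_group_def)
lemma cpt: "compact_space T"
  using prof by (simp add: profinite_group_def)
lemma haus: "Hausdorff_space T"
  using prof by (simp add: profinite_group_def)
lemma ccomp: "x \<in> carrier G \<Longrightarrow> connected_component_of_set T x = {x}"
  using prof tsp by (simp add: profinite_group_def)

lemma clmult: "a \<in> carrier G \<Longrightarrow> continuous_map T T (\<lambda>x. a \<otimes> x)"
proof -
  assume a: "a \<in> carrier G"
  have "continuous_map T (prod_topology T T) (\<lambda>x. (a, x))"
    using a tsp by (intro continuous_map_pairedI) auto
  from continuous_map_compose[OF this cmult] show ?thesis by (simp add: o_def)
qed

lemma crmult: "a \<in> carrier G \<Longrightarrow> continuous_map T T (\<lambda>x. x \<otimes> a)"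
proof -
  assume a: "a \<in> carrier G"
  have "continuous_map T (prod_topology T T) (\<lambda>x. (x, a))"
    using a tsp by (intro continuous_map_pairedI) auto
  from continuous_map_compose[OF this cmult] show ?thesis by (simp add: o_def)
qed

lemma open_pre: "continuous_map T T f \<Longrightarrow> openin T S \<Longrightarrow> openin T {x\<in>carrier G. f x \<in> S}"
  using openin_continuous_map_preimage tsp by fastforce
lemma closed_pre: "continuous_map T T f \<Longrightarrow> closedin T S \<Longrightarrow> closedin T {x\<in>carrier G. f x \<in> S}"
  using closedin_continuous_map_preimage tsp by fastforce

lemma open_sub_carrier: "openin T S \<Longrightarrow> S \<subseteq> carrier G"
  using openin_subset tsp by blast

lemma subgroup_open_nbhd:
  assumes V: "subgroup V G" and W: "openin T W" "\<one> \<in> W" "W \<subseteq> V"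
  shows "openin T V"
proof (subst openin_subopen, intro ballI)
  fix v assume v: "v \<in> V"
  then have vc: "v \<in> carrier G" using V subgroup.subset by blast
  let ?S = "{x\<in>carrier G. x \<otimes> inv v \<in> W}"
  have "openin T ?S" using open_pre[OF crmult[OF inv_closed[OF vc]] W(1)] by simp
  moreover have "v \<in> ?S" using vc W by simp
  moreover have "?S \<subseteq> V"
  proof
    fix x assume x: "x \<in> ?S"
    then have "x \<otimes> inv v \<in> V" using W by blast
    then have "x \<otimes> inv v \<otimes> v \<in> V" using subgroup.m_closed[OF V] v by blast
    then show "x \<in> V" using x vc by (simp add: m_assoc)
  qed
  ultimately show "\<exists>S. openin T S \<and> v \<in> S \<and> S \<subseteq> V" by blast
qed


lemma rcos_eq:
  assumes U: "U \<subseteq> carrier G" and a: "a \<in> carrier G"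
  shows "U #> a = {x\<in>carrier G. x \<otimes> inv a \<in> U}"
proof
  show "U #> a \<subseteq> {x\<in>carrier G. x \<otimes> inv a \<in> U}"
  proof
    fix x assume "x \<in> U #> a"
    then obtain u where u: "u \<in> U" "x = u \<otimes> a" unfolding r_coset_def by blast
    have uc: "u \<in> carrier G" using u U by blast
    have "x \<otimes> inv a = u" using u uc a by (simp add: m_assoc)
    then show "x \<in> {x\<in>carrier G. x \<otimes> inv a \<in> U}" using u uc a by simp
  qed
  show "{x\<in>carrier G. x \<otimes> inv a \<in> U} \<subseteq> U #> a"
  proof
    fix x assume x: "x \<in> {x\<in>carrier G. x \<otimes> inv a \<in> U}"
    then have "x = (x \<otimes> inv a) \<otimes> a" using a by (simp add: m_assoc)
    then show "x \<in> U #> a" using x unfolding r_coset_def by blast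
  qed
qed

lemma open_rcos: "openin T U \<Longrightarrow> a \<in> carrier G \<Longrightarrow> openin T (U #> a)"
  using rcos_eq[OF open_sub_carrier] open_pre[OF crmult[OF inv_closed]] by simp

lemma closed_rcos: "closedin T U \<Longrightarrow> a \<in> carrier G \<Longrightarrow> closedin T (U #> a)"
proof -
  assume U: "closedin T U" and a: "a \<in> carrier G"
  have "U \<subseteq> carrier G" using closedin_subset[OF U] tsp by simp
  then show ?thesis using rcos_eq closed_pre[OF crmult[OF inv_closed[OF a]] U] a by simp
qed

lemma open_subgroup_rcosets_finite:
  assumes U: "open_subgroup U G T"
  shows "finite (rcosets U)"
proof -
  have sg: "subgroup U G" and oU: "openin T U" using U by (auto simp: open_subgroup_def)
  have op: "\<forall>C\<in>rcosets U. openin T C"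
    unfolding RCOSETS_def using open_rcos[OF oU] by blast
  have cov: "topspace T \<subseteq> \<Union>(rcosets U)"
    using tsp rcosets_part_G[OF sg] by simp
  obtain F where F: "finite F" "F \<subseteq> rcosets U" "topspace T \<subseteq> \<Union>F"
    using cpt[unfolded compact_space_alt, rule_format, OF conjI[OF op cov]] by blast
  have "rcosets U \<subseteq> F"
  proof
    fix C assume C: "C \<in> rcosets U"
    then obtain a where a: "a \<in> carrier G" "C = U #> a" unfolding RCOSETS_def by blast
    then have aC: "a \<in> C" using rcos_self[OF a(1) sg] by simp
    then obtain D where D: "D \<in> F" "a \<in> D" using F a tsp by blast
    have "D \<in> rcosets U" using D F by blast
    then have "\<not> disjnt C D \<Longrightarrow> C = D"
      using pairwiseD[OF rcos_disjoint[OF sg] C] by blast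
    then show "C \<in> F" using D aC by (metis disjnt_iff)
  qed
  then show ?thesis using F finite_subset by blast
qed


lemma clopen_nbhd:
  assumes W: "openin T W" "\<one> \<in> W"
  shows "\<exists>C. openin T C \<and> closedin T C \<and> \<one> \<in> C \<and> C \<subseteq> W"
proof -
  have one: "\<one> \<in> topspace T" using tsp by simp
  have "quasi_component_of T \<one> = connected_component_of T \<one>"
    by (rule quasi_eq_connected_component_of) (simp add: cpt haus)
  then have qc: "quasi_component_of_set T \<one> = {\<one>}" using ccomp[of \<one>] by simp
  have qin: "{\<one>} \<in> quasi_components_of T"
    using quasi_component_in_quasi_components_of[of T \<one>] one qc by simp
  have cl: "closedin T (topspace T - W)" using W(1) by (rule closedin_diff[OF closedin_topspace])
  have K: "compactin T (topspace T - W)"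
    by (rule closedin_compact_space[OF cpt cl])
  have "disjnt {\<one>} (topspace T - W)" using W(2) by (simp add: disjnt_def)
  then have "separated_between T {\<one>} (topspace T - W)"
    using separated_between_quasi_component_compact[OF qin K] by simp
  then obtain U V where UV: "openin T U" "openin T V" "U \<union> V = topspace T" "disjnt U V"
    "{\<one>} \<subseteq> U" "topspace T - W \<subseteq> V"
    unfolding separated_between_def by blast
  have "U = topspace T - V" using UV(3,4) unfolding disjnt_def by blast
  then have "closedin T U" using closedin_diff[OF closedin_topspace UV(2)] by simp
  moreover have "U \<subseteq> W" using UV(3,4,6) unfolding disjnt_def by blast
  ultimately show ?thesis using UV(1,5) by blast
qed

lemma open_subgroup_in:
  assumes W: "openin T W" "\<one> \<in> W"
  shows "\<exists>U. open_subgroup U G T \<and> U \<subseteq> W"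
proof -
  obtain C where C: "openin T C" "closedin T C" "\<one> \<in> C" "C \<subseteq> W"
    using clopen_nbhd[OF W] by blast
  have Cc: "C \<subseteq> carrier G" using open_sub_carrier[OF C(1)] .
  define P where "P = {z \<in> topspace (prod_topology T T). (\<lambda>(x, y). x \<otimes> y) z \<in> C}"
  have oP: "openin (prod_topology T T) P"
    unfolding P_def by (rule openin_continuous_map_preimage[OF cmult C(1)])
  have "\<forall>c\<in>C. \<exists>A B. openin T A \<and> openin T B \<and> c \<in> A \<and> \<one> \<in> B \<and> A \<times> B \<subseteq> P"
  proof
    fix c assume c: "c \<in> C"
    then have "(c, \<one>) \<in> P" using Cc tsp unfolding P_def by auto
    then show "\<exists>A B. openin T A \<and> openin T B \<and> c \<in> A \<and> \<one> \<in> B \<and> A \<times> B \<subseteq> P"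
      using oP unfolding openin_prod_topology_alt by blast
  qed
  then obtain A B where AB: "\<And>c. c \<in> C \<Longrightarrow> openin T (A c) \<and> openin T (B c) \<and> c \<in> A c \<and> \<one> \<in> B c \<and> A c \<times> B c \<subseteq> P"
    by metis
  have "compactin T C" using closedin_compact_space[OF cpt C(2)] .
  then obtain F where F: "finite F" "F \<subseteq> A ` C" "C \<subseteq> \<Union>F"
    unfolding compactin_def
    apply (elim conjE allE[of _ "A ` C"])
    using AB by blast
  then obtain C0 where C0: "C0 \<subseteq> C" "finite C0" "F = A ` C0"
    using finite_subset_image by metis
  define B0 where "B0 = (\<Inter>c\<in>C0. B c) \<inter> topspace T"
  have oB0: "openin T B0" unfolding B0_def using C0 AB by (intro openin_INT) auto
  have oneB0: "\<one> \<in> B0" unfolding B0_def using C0 AB tsp by auto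
  define V where "V = B0 \<inter> {x\<in>carrier G. inv x \<in> B0}"
  have oV: "openin T V" unfolding V_def using oB0 open_pre[OF cinv oB0] by auto
  have oneV: "\<one> \<in> V" unfolding V_def using oneB0 by simp
  have Vc: "V \<subseteq> carrier G" unfolding V_def by auto
  have Vinv: "inv v \<in> V" if "v \<in> V" for v
    using that Vc B0_def tsp unfolding V_def by auto
  have CV: "c \<otimes> v \<in> C" if c: "c \<in> C" and v: "v \<in> V" for c v
  proof -
    obtain c0 where c0: "c0 \<in> C0" "c \<in> A c0" using F C0 c by blast
    have "v \<in> B c0" using v c0 unfolding V_def B0_def by blast
    then have "(c, v) \<in> P" using AB[of c0] c0 C0 by blast
    then show ?thesis unfolding P_def by simp
  qed
  define U where "U = {g\<in>carrier G. \<forall>c\<in>C. c \<otimes> g \<in> C \<and> c \<otimes> inv g \<in> C}"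
  have sgU: "subgroup U G"
  proof (rule subgroupI)
    show "U \<subseteq> carrier G" unfolding U_def by blast
    show "U \<noteq> {}"
    proof -
      have "\<one> \<in> U" unfolding U_def using Cc by auto
      then show ?thesis by blast
    qed
    fix a b assume a: "a \<in> U"
    then show "inv a \<in> U" unfolding U_def by auto
    assume b: "b \<in> U"
    have ac: "a \<in> carrier G" and bc: "b \<in> carrier G" using a b unfolding U_def by auto
    show "a \<otimes> b \<in> U" unfolding U_def
    proof (intro CollectI conjI ballI)
      show "a \<otimes> b \<in> carrier G" using ac bc by simp
      fix c assume c: "c \<in> C"
      then have cc: "c \<in> carrier G" using Cc by blast
      have "c \<otimes> a \<otimes> b \<in> C" using a b c unfolding U_def by blast
      then show "c \<otimes> (a \<otimes> b) \<in> C" using ac bc cc by (simp add: m_assoc)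
      have "c \<otimes> inv b \<otimes> inv a \<in> C" using a b c unfolding U_def by blast
      then show "c \<otimes> inv (a \<otimes> b) \<in> C" using ac bc cc by (simp add: m_assoc inv_mult_group)
    qed
  qed
  have "V \<subseteq> U" unfolding U_def using Vc CV Vinv by blast
  then have "openin T U" using subgroup_open_nbhd[OF sgU oV oneV] by blast
  moreover have "U \<subseteq> C"
  proof
    fix g assume "g \<in> U"
    then have "\<one> \<otimes> g \<in> C" "g \<in> carrier G" using C(3) unfolding U_def by auto
    then show "g \<in> C" by simp
  qed
  ultimately show ?thesis using sgU C(4) unfolding open_subgroup_def by blast
qed

lemma conj_cont: "r \<in> carrier G \<Longrightarrow> continuous_map T T (\<lambda>g. r \<otimes> g \<otimes> inv r)"
  using continuous_map_compose[OF clmult crmult[OF inv_closed]] by (simp add: o_def)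

lemma core_open:
  assumes U: "open_subgroup U G T"
  shows "\<exists>N. N \<lhd> G \<and> openin T N \<and> N \<subseteq> U"
proof -
  have sg: "subgroup U G" using U by (simp add: open_subgroup_def)
  have oU: "openin T U" using U by (simp add: open_subgroup_def)
  have Uc: "U \<subseteq> carrier G" using subgroup.subset[OF sg] .
  define R where "R = rcosets U"
  have finR: "finite R" unfolding R_def by (rule open_subgroup_rcosets_finite[OF U])
  define rep where "rep C = (SOME a. a \<in> carrier G \<and> C = U #> a)" for C
  have rep: "rep C \<in> carrier G \<and> C = U #> rep C" if "C \<in> R" for C
  proof -
    have "\<exists>a. a \<in> carrier G \<and> C = U #> a" using that unfolding R_def RCOSETS_def by blast
    then show ?thesis unfolding rep_def by (rule someI_ex)
  qed
  define N where "N = {g\<in>carrier G. \<forall>x\<in>carrier G. x \<otimes> g \<otimes> inv x \<in> U}"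
  have Neq: "N = (\<Inter>C\<in>R. {g\<in>carrier G. rep C \<otimes> g \<otimes> inv (rep C) \<in> U})"
  proof
    show "N \<subseteq> (\<Inter>C\<in>R. {g\<in>carrier G. rep C \<otimes> g \<otimes> inv (rep C) \<in> U})"
      unfolding N_def using rep by blast
    have R1: "U #> \<one> \<in> R" unfolding R_def RCOSETS_def by blast
    show "(\<Inter>C\<in>R. {g\<in>carrier G. rep C \<otimes> g \<otimes> inv (rep C) \<in> U}) \<subseteq> N"
    proof
      fix g assume g: "g \<in> (\<Inter>C\<in>R. {g\<in>carrier G. rep C \<otimes> g \<otimes> inv (rep C) \<in> U})"
      then have gc: "g \<in> carrier G" using R1 by blast
      show "g \<in> N" unfolding N_def
      proof (intro CollectI conjI ballI gc)
        fix x assume xc: "x \<in> carrier G"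
        define C where "C = U #> x"
        have CR: "C \<in> R" unfolding C_def R_def RCOSETS_def using xc by blast
        define r where "r = rep C"
        have rc: "r \<in> carrier G" and Cr: "C = U #> r" using rep[OF CR] unfolding r_def by auto
        have "x \<in> C" unfolding C_def using rcos_self[OF xc sg] .
        then obtain u where u: "u \<in> U" "x = u \<otimes> r" using Cr unfolding r_coset_def by blast
        have uc: "u \<in> carrier G" using u Uc by blast
        have rg: "r \<otimes> g \<otimes> inv r \<in> U" using g CR unfolding r_def by blast
        have "x \<otimes> g \<otimes> inv x = u \<otimes> (r \<otimes> g \<otimes> inv r) \<otimes> inv u"
          using u(2) uc rc gc by (simp add: m_assoc inv_mult_group)
        also have "\<dots> \<in> U" using rg u sg uc
          by (simp add: subgroup.m_closed subgroup.m_inv_closed)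
        finally show "x \<otimes> g \<otimes> inv x \<in> U" .
      qed
    qed
  qed
  have Rne: "R \<noteq> {}" unfolding R_def RCOSETS_def by blast
  have oN: "openin T N" unfolding Neq
    using finR Rne rep open_pre[OF conj_cont oU] by (intro openin_INT2) auto
  have nN: "N \<lhd> G"
  proof (subst normal_inv_iff, intro conjI)
    show "subgroup N G"
    proof (rule subgroupI)
      show "N \<subseteq> carrier G" unfolding N_def by blast
      have "\<one> \<in> N" unfolding N_def using sg by (simp add: subgroup.one_closed)
      then show "N \<noteq> {}" by blast
      fix a assume a: "a \<in> N"
      then have ac: "a \<in> carrier G" unfolding N_def by blast
      show "inv a \<in> N" unfolding N_def
      proof (intro CollectI conjI ballI)
        show "inv a \<in> carrier G" using ac by simp
        fix x assume xc: "x \<in> carrier G"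
        have "x \<otimes> inv a \<otimes> inv x = inv (x \<otimes> a \<otimes> inv x)"
          using ac xc by (simp add: m_assoc inv_mult_group)
        then show "x \<otimes> inv a \<otimes> inv x \<in> U" using a xc sg unfolding N_def
          by (simp add: subgroup.m_inv_closed)
      qed
      fix b assume b: "b \<in> N"
      then have bc: "b \<in> carrier G" unfolding N_def by blast
      show "a \<otimes> b \<in> N" unfolding N_def
      proof (intro CollectI conjI ballI)
        show "a \<otimes> b \<in> carrier G" using ac bc by simp
        fix x assume xc: "x \<in> carrier G"
        have e: "inv x \<otimes> (x \<otimes> (b \<otimes> inv x)) = b \<otimes> inv x"
          using bc xc by (simp add: m_assoc[symmetric])
        have "x \<otimes> (a \<otimes> b) \<otimes> inv x = (x \<otimes> a \<otimes> inv x) \<otimes> (x \<otimes> b \<otimes> inv x)"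
          using ac bc xc by (simp add: m_assoc e)
        then show "x \<otimes> (a \<otimes> b) \<otimes> inv x \<in> U" using a b xc sg unfolding N_def
          by (simp add: subgroup.m_closed)
      qed
    qed
    show "\<forall>x\<in>carrier G. \<forall>h\<in>N. x \<otimes> h \<otimes> inv x \<in> N"
    proof (intro ballI)
      fix x h assume xc: "x \<in> carrier G" and h: "h \<in> N"
      then have hc: "h \<in> carrier G" unfolding N_def by blast
      show "x \<otimes> h \<otimes> inv x \<in> N" unfolding N_def
      proof (intro CollectI conjI ballI)
        show "x \<otimes> h \<otimes> inv x \<in> carrier G" using xc hc by simp
        fix y assume yc: "y \<in> carrier G"
        have "y \<otimes> (x \<otimes> h \<otimes> inv x) \<otimes> inv y = (y \<otimes> x) \<otimes> h \<otimes> inv (y \<otimes> x)"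
          using xc hc yc by (simp add: m_assoc inv_mult_group)
        then show "y \<otimes> (x \<otimes> h \<otimes> inv x) \<otimes> inv y \<in> U" using h xc yc unfolding N_def
          by simp
      qed
    qed
  qed
  have "N \<subseteq> U"
  proof
    fix g assume "g \<in> N"
    then have "g \<in> carrier G" "\<forall>x\<in>carrier G. x \<otimes> g \<otimes> inv x \<in> U" unfolding N_def by auto
    then have "\<one> \<otimes> g \<otimes> inv \<one> \<in> U" "g \<in> carrier G" by (meson one_closed)+
    then show "g \<in> U" by simp
  qed
  then show ?thesis using nN oN by blast
qed

lemma normal_open_in:
  assumes W: "openin T W" "\<one> \<in> W"
  shows "\<exists>N. N \<lhd> G \<and> openin T N \<and> N \<subseteq> W"
  using open_subgroup_in[OF W] core_open by blast

lemma normal_mult_open: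
  assumes nN: "N \<lhd> G" and oN: "openin T N" and K: "subgroup K G"
  shows "open_subgroup (N <#> K) G T" "K \<subseteq> N <#> K" "N \<subseteq> N <#> K"
proof -
  have "second_isomorphism_grp N G K"
    using nN K by (simp add: second_isomorphism_grp_def second_isomorphism_grp_axioms_def)
  then have sg: "subgroup (N <#> K) G" by (rule second_isomorphism_grp.normal_set_mult_subgroup)
  have Nc: "N \<subseteq> carrier G" using normal_imp_subgroup[OF nN] subgroup.subset by blast
  have Kc: "K \<subseteq> carrier G" using K subgroup.subset by blast
  have one_N: "\<one> \<in> N" using normal_imp_subgroup[OF nN] subgroup.one_closed by blast
  have one_K: "\<one> \<in> K" using K subgroup.one_closed by blast
  show "K \<subseteq> N <#> K"
  proof
    fix k assume k: "k \<in> K"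
    then have "k = \<one> \<otimes> k" using Kc by auto
    then show "k \<in> N <#> K" using one_N k unfolding set_mult_def by blast
  qed
  show NNK: "N \<subseteq> N <#> K"
  proof
    fix n assume n: "n \<in> N"
    then have "n = n \<otimes> \<one>" using Nc by auto
    then show "n \<in> N <#> K" using one_K n unfolding set_mult_def by blast
  qed
  show "open_subgroup (N <#> K) G T"
    using subgroup_open_nbhd[OF sg oN one_N NNK] sg by (simp add: open_subgroup_def)
qed

lemma separate:
  assumes K: "closed_subgroup K G T" and x: "x \<in> carrier G" "x \<notin> K"
  shows "\<exists>U. open_subgroup U G T \<and> K \<subseteq> U \<and> x \<notin> U"
proof -
  have sgK: "subgroup K G" and cK: "closedin T K" using K by (auto simp: closed_subgroup_def)
  define Cs where "Cs = {y\<in>carrier G. inv y \<otimes> x \<in> K}"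
  have "continuous_map T T (\<lambda>y. inv y \<otimes> x)"
    using continuous_map_compose[OF cinv crmult[OF x(1)]] by (simp add: o_def)
  then have cCs: "closedin T Cs" unfolding Cs_def using closed_pre cK by blast
  define W where "W = topspace T - Cs"
  have oW: "openin T W" unfolding W_def using cCs by (simp add: openin_diff)
  have oneW: "\<one> \<in> W" unfolding W_def Cs_def using x tsp by simp
  obtain N where N: "N \<lhd> G" "openin T N" "N \<subseteq> W" using normal_open_in[OF oW oneW] by blast
  have U: "open_subgroup (N <#> K) G T" "K \<subseteq> N <#> K" using normal_mult_open[OF N(1,2) sgK] by auto
  have "x \<notin> N <#> K"
  proof
    assume "x \<in> N <#> K"
    then obtain n k where nk: "n \<in> N" "k \<in> K" "x = n \<otimes> k" unfolding set_mult_def by blast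
    have nc: "n \<in> carrier G" using nk N(3) W_def tsp by blast
    have kc: "k \<in> carrier G" using nk sgK subgroup.subset by blast
    have "inv n \<otimes> x = k" using nk nc kc by (simp add: m_assoc[symmetric])
    then have "n \<in> Cs" unfolding Cs_def using nc nk by simp
    then show False using nk N(3) unfolding W_def by blast
  qed
  then show ?thesis using U by blast
qed

lemma carrier_open_subgroup: "open_subgroup (carrier G) G T"
  unfolding open_subgroup_def using subgroup_self openin_topspace[of T] tsp by simp

lemma OH_infinite:
  assumes H: "closed_subgroup H G T" and inf: "infinite (rcosets H)"
  shows "infinite {U. open_subgroup U G T \<and> H \<subseteq> U}"
proof
  assume fin: "finite {U. open_subgroup U G T \<and> H \<subseteq> U}"
  define Os where "Os = {U. open_subgroup U G T \<and> H \<subseteq> U}"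
  have sgH: "subgroup H G" using H by (simp add: closed_subgroup_def)
  have Ocar: "carrier G \<in> Os" unfolding Os_def using carrier_open_subgroup subgroup.subset[OF sgH] by blast
  have "openin T (\<Inter>Os)" using fin Ocar unfolding Os_def open_subgroup_def by (intro openin_Inter) auto
  moreover have "subgroup (\<Inter>Os) G" using Ocar unfolding Os_def open_subgroup_def
    by (intro subgroups_Inter) auto
  moreover have "\<Inter>Os = H"
  proof
    show "H \<subseteq> \<Inter>Os" unfolding Os_def by blast
    show "\<Inter>Os \<subseteq> H"
    proof
      fix x assume x: "x \<in> \<Inter>Os"
      then have xc: "x \<in> carrier G" using Ocar by blast
      show "x \<in> H"
      proof (rule ccontr)
        assume "x \<notin> H"
        then obtain U where "open_subgroup U G T" "H \<subseteq> U" "x \<notin> U" using separate[OF H xc] by blast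
        then show False using x unfolding Os_def by blast
      qed
    qed
  qed
  ultimately have "open_subgroup H G T" by (simp add: open_subgroup_def)
  then show False using open_subgroup_rcosets_finite inf by blast
qed

lemma finite_supergroups:
  assumes P: "open_subgroup P G T"
  shows "finite {U. subgroup U G \<and> P \<subseteq> U}"
proof -
  define S where "S = {U. subgroup U G \<and> P \<subseteq> U}"
  define f where "f U = {C \<in> rcosets P. C \<subseteq> U}" for U
  have sgP: "subgroup P G" using P by (simp add: open_subgroup_def)
  have rec: "\<Union>(f U) = U" if U: "U \<in> S" for U
  proof
    show "\<Union>(f U) \<subseteq> U" unfolding f_def by blast
    show "U \<subseteq> \<Union>(f U)"
    proof
      fix u assume u: "u \<in> U"
      have sgU: "subgroup U G" and PU: "P \<subseteq> U" using U unfolding S_def by auto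
      have uc: "u \<in> carrier G" using u sgU subgroup.subset by blast
      have "P #> u \<subseteq> U"
      proof
        fix y assume "y \<in> P #> u"
        then obtain p where p: "p \<in> P" "y = p \<otimes> u" unfolding r_coset_def by blast
        then have "p \<in> U" using PU by blast
        then show "y \<in> U" using p(2) u subgroup.m_closed[OF sgU] by simp
      qed
      moreover have "P #> u \<in> rcosets P" using uc unfolding RCOSETS_def by blast
      moreover have "u \<in> P #> u" using rcos_self[OF uc sgP] .
      ultimately show "u \<in> \<Union>(f U)" unfolding f_def by blast
    qed
  qed
  have inj: "inj_on f S"
  proof (rule inj_onI)
    fix U V assume UV: "U \<in> S" "V \<in> S" "f U = f V"
    have "U = \<Union>(f U)" using rec[OF UV(1)] by (rule sym)
    also have "\<dots> = \<Union>(f V)" using UV(3) by (rule arg_cong)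
    also have "\<dots> = V" by (rule rec[OF UV(2)])
    finally show "U = V" .
  qed
  have "finite (f ` S)"
  proof (rule finite_subset)
    show "f ` S \<subseteq> Pow (rcosets P)" unfolding f_def by blast
    show "finite (Pow (rcosets P))" using open_subgroup_rcosets_finite[OF P] by simp
  qed
  then have "finite S" using finite_imageD[OF _ inj] by blast
  then show ?thesis unfolding S_def .
qed

definition Ov where "Ov K = {U. open_subgroup U G T \<and> K \<subseteq> U}"

lemma open_subgroup_Int:
  "open_subgroup U G T \<Longrightarrow> open_subgroup V G T \<Longrightarrow> open_subgroup (U \<inter> V) G T"
  unfolding open_subgroup_def using subgroups_Inter_pair openin_Int by blast

lemma succ_step:
  assumes K1: "closed_subgroup K1 G T" and K2: "closed_subgroup K2 G T" and sub: "K2 \<subseteq> K1"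
    and fin: "finite (rcosets\<^bsub>G\<lparr>carrier := K1\<rparr>\<^esub> K2)"
  shows "\<exists>F. (\<forall>V. finite (F V)) \<and> Ov K2 \<subseteq> (\<Union>V\<in>Ov K1. F V)"
proof -
  have sg1: "subgroup K1 G" and sg2: "subgroup K2 G" and c2: "closedin T K2"
    using K1 K2 by (auto simp: closed_subgroup_def)
  have K1c: "K1 \<subseteq> carrier G" using sg1 subgroup.subset by blast
  define R where "R = rcosets\<^bsub>G\<lparr>carrier := K1\<rparr>\<^esub> K2"
  have Req: "R = (\<Union>a\<in>K1. {K2 #> a})" unfolding R_def RCOSETS_def by simp
  have finR: "finite R" using fin unfolding R_def .
  define Bad where "Bad = \<Union>{C\<in>R. \<one> \<notin> C}"
  have cBad: "closedin T Bad" unfolding Bad_def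
  proof (rule closedin_Union)
    show "finite {C\<in>R. \<one> \<notin> C}" using finR by simp
    fix C assume "C \<in> {C\<in>R. \<one> \<notin> C}"
    then obtain a where a: "a \<in> K1" "C = K2 #> a" unfolding Req by blast
    then show "closedin T C" using closed_rcos[OF c2] K1c by blast
  qed
  define W where "W = topspace T - Bad"
  have oW: "openin T W" unfolding W_def using cBad by (simp add: openin_diff)
  have oneW: "\<one> \<in> W" unfolding W_def Bad_def using tsp by simp
  obtain N where N: "open_subgroup N G T" "N \<subseteq> W" using open_subgroup_in[OF oW oneW] by blast
  have NK: "N \<inter> K1 \<subseteq> K2"
  proof
    fix n assume n: "n \<in> N \<inter> K1"
    then have nc: "n \<in> carrier G" using K1c by blast
    have CR: "K2 #> n \<in> R" unfolding Req using n by blast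
    have nC: "n \<in> K2 #> n" using rcos_self[OF nc sg2] .
    have "\<one> \<in> K2 #> n"
    proof (rule ccontr)
      assume "\<one> \<notin> K2 #> n"
      then have "n \<in> Bad" unfolding Bad_def using CR nC by blast
      then show False using n N(2) unfolding W_def by blast
    qed
    then obtain k where k: "k \<in> K2" "\<one> = k \<otimes> n" unfolding r_coset_def by blast
    have kc: "k \<in> carrier G" using k sg2 subgroup.subset by blast
    have "inv k \<otimes> (k \<otimes> n) = n" using kc nc by (simp add: m_assoc[symmetric])
    then have "n = inv k" using k(2) kc by (metis r_one inv_closed)
    then show "n \<in> K2" using k(1) sg2 by (simp add: subgroup.m_inv_closed)
  qed
  define F where "F V = (if open_subgroup V G T then {U. subgroup U G \<and> V \<inter> N \<subseteq> U} else {})" for V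
  have finF: "\<forall>V. finite (F V)"
  proof
    fix V show "finite (F V)"
    proof (cases "open_subgroup V G T")
      case True
      then show ?thesis unfolding F_def using finite_supergroups open_subgroup_Int N(1) by simp
    next
      case False
      then show ?thesis unfolding F_def by simp
    qed
  qed
  have "Ov K2 \<subseteq> (\<Union>V\<in>Ov K1. F V)"
  proof
    fix U assume U: "U \<in> Ov K2"
    then have oU: "open_subgroup U G T" and K2U: "K2 \<subseteq> U" unfolding Ov_def by auto
    have sgU: "subgroup U G" using oU by (simp add: open_subgroup_def)
    have sgN: "subgroup N G" using N(1) by (simp add: open_subgroup_def)
    obtain M where M: "M \<lhd> G" "openin T M" "M \<subseteq> U \<inter> N"
      using core_open[OF open_subgroup_Int[OF oU N(1)]] by blast
    define V where "V = M <#> K1"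
    have V: "open_subgroup V G T" "K1 \<subseteq> V" unfolding V_def using normal_mult_open[OF M(1,2) sg1] by auto
    have VO: "V \<in> Ov K1" using V unfolding Ov_def by blast
    have "V \<inter> N \<subseteq> U"
    proof
      fix x assume x: "x \<in> V \<inter> N"
      then obtain mm h where mh: "mm \<in> M" "h \<in> K1" "x = mm \<otimes> h" unfolding V_def set_mult_def by blast
      have mU: "mm \<in> U" and mN: "mm \<in> N" using mh(1) M(3) by auto
      have mc: "mm \<in> carrier G" using subgroup.subset[OF sgU] mU by blast
      have hc: "h \<in> carrier G" using mh(2) K1c by blast
      have xN: "x \<in> N" using x by blast
      have "h = inv mm \<otimes> x" using mh(3) mc hc by (simp add: m_assoc[symmetric])
      moreover have "inv mm \<otimes> x \<in> N"
        using subgroup.m_closed[OF sgN subgroup.m_inv_closed[OF sgN mN] xN] .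
      ultimately have "h \<in> N" by simp
      then have "h \<in> U" using mh(2) NK K2U by blast
      then show "x \<in> U" using mh(3) mU subgroup.m_closed[OF sgU] by simp
    qed
    then have "U \<in> F V" unfolding F_def using V sgU by simp
    then show "U \<in> (\<Union>V\<in>Ov K1. F V)" using VO by blast
  qed
  then show ?thesis using finF by blast
qed

lemma limit_step:
  fixes K :: "'i::linorder \<Rightarrow> 'a set"
  assumes cl: "\<And>i. i \<in> I \<Longrightarrow> closedin T (K i)"
    and mono: "\<And>i j. i \<in> I \<Longrightarrow> j \<in> I \<Longrightarrow> i \<le> j \<Longrightarrow> K j \<subseteq> K i"
    and ne: "I \<noteq> {}" and oU: "openin T U" and sub: "(\<Inter>i\<in>I. K i) \<subseteq> U"
  shows "\<exists>i\<in>I. K i \<subseteq> U"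
proof (rule ccontr)
  assume nt: "\<not> (\<exists>i\<in>I. K i \<subseteq> U)"
  define \<U> where "\<U> = (\<lambda>i. K i - U) ` I"
  have "\<forall>C\<in>\<U>. closedin T C" unfolding \<U>_def using cl oU by blast
  moreover have "\<forall>\<F>. finite \<F> \<and> \<F> \<subseteq> \<U> \<longrightarrow> \<Inter>\<F> \<noteq> {}"
  proof (intro allI impI)
    fix \<F> assume F: "finite \<F> \<and> \<F> \<subseteq> \<U>"
    show "\<Inter>\<F> \<noteq> {}"
    proof (cases "\<F> = {}")
      case True then show ?thesis by simp
    next
      case False
      obtain I0 where I0: "I0 \<subseteq> I" "finite I0" "\<F> = (\<lambda>i. K i - U) ` I0"
        using F finite_subset_image unfolding \<U>_def by metis
      have I0ne: "I0 \<noteq> {}" using I0 False by blast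
      define j where "j = Max I0"
      have jI0: "j \<in> I0" unfolding j_def using I0 I0ne by simp
      have "K j - U \<subseteq> \<Inter>\<F>"
      proof
        fix x assume x: "x \<in> K j - U"
        show "x \<in> \<Inter>\<F>"
        proof
          fix C assume "C \<in> \<F>"
          then obtain i where i: "i \<in> I0" "C = K i - U" using I0 by blast
          have "i \<le> j" unfolding j_def using i I0 by simp
          then have "K j \<subseteq> K i" using mono i I0 jI0 by blast
          then show "x \<in> C" using x i by blast
        qed
      qed
      moreover have "K j - U \<noteq> {}" using nt jI0 I0 by blast
      ultimately show ?thesis by blast
    qed
  qed
  ultimately have "\<Inter>\<U> \<noteq> {}" using cpt unfolding compact_space_fip by blast
  then obtain x where "x \<in> \<Inter>\<U>" by blast
  then have "\<forall>i\<in>I. x \<in> K i" "x \<notin> U" unfolding \<U>_def using ne by auto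
  then show False using sub by blast
qed

end

theorem lemma1p13:
  fixes G :: "('a, 'b) monoid_scheme" and T :: "'a topology"
    and Hs :: "'i::wellorder \<Rightarrow> 'a set" and m :: 'i and H :: "'a set"
  assumes "profinite_group G T"
    and "closed_subgroup H G T"
    and "infinite (rcosets\<^bsub>G\<^esub> H)"
    and "accessible_series G T Hs m H"
    and "\<forall>a<m. finite (rcosets\<^bsub>G\<lparr>carrier := Hs a\<rparr>\<^esub> (Hs (idx_succ a)))
               \<and> Hs (idx_succ a) \<noteq> Hs a"
  shows "{..<m} \<approx> {U. open_subgroup U G T \<and> H \<subseteq> U}"
proof -
  have grp: "group G" using assms(1) by (simp add: profinite_group_def topological_group_def)
  interpret pgrp G T using grp assms(1) by (simp add: pgrp_def pgrp_axioms_def)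
  note acc = assms(4)[unfolded accessible_series_def]
  have cl0: "\<forall>a\<le>m. closed_subgroup (Hs a) G T" using acc by (rule conjunct1)
  have cl: "\<And>a. a \<le> m \<Longrightarrow> closed_subgroup (Hs a) G T" using cl0 by blast
  have H0: "Hs (LEAST i. True) = carrier G" using acc[THEN conjunct2, THEN conjunct1] .
  have Hm: "Hs m = H" using acc[THEN conjunct2, THEN conjunct2, THEN conjunct1] .
  have mono0: "\<forall>a b. a \<le> b \<and> b \<le> m \<longrightarrow> Hs b \<subseteq> Hs a"
    using acc[THEN conjunct2, THEN conjunct2, THEN conjunct2, THEN conjunct1] .
  have mono: "\<And>a b. a \<le> b \<Longrightarrow> b \<le> m \<Longrightarrow> Hs b \<subseteq> Hs a" using mono0 by blast
  have lim0: "\<forall>a\<le>m. idx_limit a \<longrightarrow> Hs a = (\<Inter>b\<in>{..<a}. Hs b)"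
    using acc[THEN conjunct2, THEN conjunct2, THEN conjunct2, THEN conjunct2, THEN conjunct2] .
  have lim: "\<And>a. a \<le> m \<Longrightarrow> idx_limit a \<Longrightarrow> Hs a = (\<Inter>b\<in>{..<a}. Hs b)" using lim0 by blast
  have main: "l \<le> m \<longrightarrow> lepoll (Ov (Hs l)) ({..l} \<times> (UNIV::nat set)) \<and> (finite {..l} \<longrightarrow> finite (Ov (Hs l)))" for l
  proof (induction l rule: less_induct)
    case (less l)
    show ?case
    proof
      assume lm: "l \<le> m"
      have IH: "lepoll (Ov (Hs b)) ({..b} \<times> (UNIV::nat set)) \<and> (finite {..b} \<longrightarrow> finite (Ov (Hs b)))"
        if "b < l" for b using less that lm by auto
      define B where "B = {..l} \<times> (UNIV::nat set)"
      have infB: "infinite B" unfolding B_def by (rule infinite_times_UNIV) auto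
      have Bmono: "{..b} \<times> (UNIV::nat set) \<subseteq> B" if "b \<le> l" for b
        unfolding B_def using that by auto
      consider (zero) "l = (LEAST i. True)" | (limit) "idx_limit l" | (succ) b where "b < l" "idx_succ b = l"
        using idx_cases[of l] by blast
      then show "lepoll (Ov (Hs l)) B \<and> (finite {..l} \<longrightarrow> finite (Ov (Hs l)))"
      proof cases
        case zero
        have "Ov (Hs l) = {carrier G}"
        proof
          show "Ov (Hs l) \<subseteq> {carrier G}"
            unfolding Ov_def open_subgroup_def using zero H0 subgroup.subset by blast
          show "{carrier G} \<subseteq> Ov (Hs l)"
            unfolding Ov_def using zero H0 carrier_open_subgroup by simp
        qed
        moreover have "{carrier G} = (\<lambda>_. carrier G) ` B" unfolding B_def by auto
        ultimately show ?thesis using image_lepoll by (metis finite.emptyI finite.insertI)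
      next
        case succ
        have bm: "b < m" using succ lm by simp
        have fin: "finite (rcosets\<^bsub>G\<lparr>carrier := Hs b\<rparr>\<^esub> (Hs l))" using assms(5) bm succ(2) by blast
        obtain F where F: "\<forall>V. finite (F V)" "Ov (Hs l) \<subseteq> (\<Union>V\<in>Ov (Hs b). F V)"
          using succ_step[OF cl cl mono fin] succ lm by (meson less_imp_le order.trans)
        have IHb: "lepoll (Ov (Hs b)) ({..b} \<times> (UNIV::nat set))" "finite {..b} \<Longrightarrow> finite (Ov (Hs b))"
          using IH[OF succ(1)] by auto
        have "lepoll (\<Union>V\<in>Ov (Hs b). F V) B"
        proof (rule lepoll_UN_inf[OF infB])
          show "lepoll (Ov (Hs b)) B"
            using lepoll_trans[OF IHb(1) subset_imp_lepoll[OF Bmono]] succ(1) by simp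
          fix V show "lepoll (F V) B" using finite_lepoll_infinite[OF infB] F(1) by blast
        qed
        then have "lepoll (Ov (Hs l)) B" using lepoll_trans[OF subset_imp_lepoll[OF F(2)]] by blast
        moreover have "finite (Ov (Hs l))" if "finite {..l}"
        proof -
          have "finite {..b}" using that succ(1) by (meson atMost_subset_iff finite_subset less_imp_le)
          then show ?thesis using IHb(2) F finite_subset by (metis finite_UN)
        qed
        ultimately show ?thesis by blast
      next
        case limit
        have sub: "Ov (Hs l) \<subseteq> (\<Union>b\<in>{..<l}. Ov (Hs b))"
        proof
          fix U assume U: "U \<in> Ov (Hs l)"
          then have oU: "openin T U" and HU: "Hs l \<subseteq> U" unfolding Ov_def open_subgroup_def by auto
          have "\<exists>b\<in>{..<l}. Hs b \<subseteq> U"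
          proof (rule limit_step)
            show "\<And>i. i \<in> {..<l} \<Longrightarrow> closedin T (Hs i)"
              using cl lm unfolding closed_subgroup_def by (meson lessThan_iff less_imp_le order.trans)
            show "\<And>i j. i \<in> {..<l} \<Longrightarrow> j \<in> {..<l} \<Longrightarrow> i \<le> j \<Longrightarrow> Hs j \<subseteq> Hs i"
              using mono lm by (meson lessThan_iff less_imp_le order.trans)
            show "{..<l} \<noteq> {}" using limit unfolding idx_limit_def by auto
            show "openin T U" by fact
            show "(\<Inter>i\<in>{..<l}. Hs i) \<subseteq> U" using lim[OF lm limit] HU by simp
          qed
          then show "U \<in> (\<Union>b\<in>{..<l}. Ov (Hs b))" using U unfolding Ov_def by auto
        qed
        have "lepoll (\<Union>b\<in>{..<l}. Ov (Hs b)) B"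
        proof (rule lepoll_UN_inf[OF infB])
          have "{..<l} \<subseteq> fst ` B" unfolding B_def by force
          then show "lepoll {..<l} B" by (rule subset_image_lepoll)
          fix b assume "b \<in> {..<l}"
          then have bl: "b < l" by simp
          show "lepoll (Ov (Hs b)) B"
            using lepoll_trans[OF conjunct1[OF IH[OF bl]] subset_imp_lepoll[OF Bmono]] bl by simp
        qed
        then have "lepoll (Ov (Hs l)) B" using lepoll_trans[OF subset_imp_lepoll[OF sub]] by blast
        moreover have "finite (Ov (Hs l))" if "finite {..l}"
        proof -
          have "\<And>b. b \<in> {..<l} \<Longrightarrow> finite (Ov (Hs b))"
            using IH that by (meson atMost_subset_iff finite_subset lessThan_iff less_imp_le)
          moreover have "finite {..<l}" using that by (rule finite_subset[rotated]) auto
          ultimately show ?thesis using sub finite_subset by (metis finite_UN)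
        qed
        ultimately show ?thesis by blast
      qed
    qed
  qed
  have OvH: "Ov H = {U. open_subgroup U G T \<and> H \<subseteq> U}" by (simp add: Ov_def)
  have infO: "infinite (Ov H)" using OH_infinite[OF assms(2,3)] OvH by simp
  have mainm: "lepoll (Ov H) ({..m} \<times> (UNIV::nat set))" "finite {..m} \<Longrightarrow> finite (Ov H)"
    using main[of m] Hm by auto
  have atm: "{..m} = insert m {..<m}" by auto
  have infm: "infinite {..<m}"
  proof
    assume "finite {..<m}"
    then have "finite {..m}" using atm by simp
    then show False using mainm(2) infO by blast
  qed
  have le1: "lepoll (Ov H) {..<m}"
  proof -
    have eq: "{..m} \<times> (UNIV::nat set) = (\<Union>i\<in>{..m}. {i} \<times> (UNIV::nat set))" by auto
    have "lepoll (\<Union>i\<in>{..m}. {i} \<times> (UNIV::nat set)) {..<m}"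
    proof (rule lepoll_UN_inf[OF infm])
      show "lepoll {..m} {..<m}" using atm infinite_insert_eqpoll[OF infm] eqpoll_imp_lepoll by metis
      fix i
      have "lepoll ({i} \<times> (UNIV::nat set)) (UNIV::nat set)"
        using times_singleton_eqpoll eqpoll_imp_lepoll by metis
      moreover have "lepoll (UNIV::nat set) {..<m}" using infm infinite_le_lepoll by blast
      ultimately show "lepoll ({i} \<times> (UNIV::nat set)) {..<m}" by (rule lepoll_trans)
    qed
    then show ?thesis using mainm(1) eq lepoll_trans by metis
  qed
  have ex: "\<forall>a\<in>{..<m}. \<exists>U x. open_subgroup U G T \<and> Hs (idx_succ a) \<subseteq> U \<and> x \<in> Hs a \<and> x \<notin> U"
  proof
    fix a assume "a \<in> {..<m}"
    then have am: "a < m" by simp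
    have sm: "idx_succ a \<le> m" using idx_succ_le[OF am] .
    have as: "a \<le> idx_succ a" using idx_succ_gt[OF am] by simp
    have sub: "Hs (idx_succ a) \<subseteq> Hs a" using mono[OF as sm] .
    have ne: "Hs (idx_succ a) \<noteq> Hs a" using assms(5) am by blast
    obtain x where x: "x \<in> Hs a" "x \<notin> Hs (idx_succ a)" using sub ne by blast
    have "subgroup (Hs a) G" using cl[of a] am unfolding closed_subgroup_def by simp
    then have xc: "x \<in> carrier G" using x subgroup.subset by blast
    obtain U where "open_subgroup U G T" "Hs (idx_succ a) \<subseteq> U" "x \<notin> U"
      using separate[OF cl[OF sm] xc x(2)] by blast
    then show "\<exists>U x. open_subgroup U G T \<and> Hs (idx_succ a) \<subseteq> U \<and> x \<in> Hs a \<and> x \<notin> U"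
      using x by blast
  qed
  obtain Uf xf where UX: "\<And>a. a \<in> {..<m} \<Longrightarrow> open_subgroup (Uf a) G T \<and> Hs (idx_succ a) \<subseteq> Uf a \<and> xf a \<in> Hs a \<and> xf a \<notin> Uf a"
    using ex by metis
  have le2: "lepoll {..<m} (Ov H)"
    unfolding lepoll_def
  proof (intro exI conjI)
    show "inj_on Uf {..<m}"
    proof (rule linorder_inj_onI')
      fix i j assume ij: "i \<in> {..<m}" "j \<in> {..<m}" "i < j"
      have "Hs j \<subseteq> Hs (idx_succ i)" using mono[OF idx_succ_le[OF ij(3)]] ij(2) by simp
      then have "xf j \<in> Uf i" using UX[OF ij(1)] UX[OF ij(2)] by blast
      then show "Uf i \<noteq> Uf j" using UX[OF ij(2)] by blast
    qed
    show "Uf ` {..<m} \<subseteq> Ov H"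
    proof
      fix U assume "U \<in> Uf ` {..<m}"
      then obtain a where a: "a \<in> {..<m}" "U = Uf a" by blast
      have "H \<subseteq> Hs (idx_succ a)" using mono[OF idx_succ_le] a(1) Hm by (metis lessThan_iff order_refl)
      then show "U \<in> Ov H" using UX[OF a(1)] a(2) unfolding Ov_def by blast
    qed
  qed
  show ?thesis using lepoll_antisym[OF le2 le1] OvH by simp
qed

end
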